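(* Let $\|\cdot\|$ be a norm on $\mathbb{R}^d$ with dual norm $\|\cdot\|_\star$, take instance space $\mathcal{X}=\mathbb{R}^d$ with metric $\rho(x,z)=\|x-z\|$, and consider the class of homogeneous halfspaces $\{x\mapsto \operatorname{sign}(\langle w,x\rangle): w\in\mathbb{R}^d\setminus\{0\}\}$. Let $T\ge 1$ and let $(x_1,y_1),\dots,(x_T,y_T)\in\mathbb{R}^d\times\{-1,+1\}$ be arbitrary. Then: (i) for every $\gamma>0$, $\mathsf{OPT}^{\gamma}_{\mathrm{pert}}=\mathsf{OPT}^{\gamma}_{\mathrm{margin}}$; (ii) when $\|\cdot\|=\|\cdot\|_2$, for all $\sigma>0$, $\varepsilon\in(0,1)$ and $\gamma>0$ satisfying $\gamma=\sigma\,\Phi^{-1}\!\left(\tfrac12+\tfrac{\varepsilon}{2}\right)$, we have $\mathsf{OPT}^{\gamma}_{\mathrm{margin}}=\mathsf{OPT}^{\sigma,\varepsilon}_{\mathrm{gauss}}$.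
   Context: $\|w\|_\star=\sup_{\|x\|\le 1}\langle w,x\rangle$ is the dual norm. $B(x,\gamma)=\{z\in\mathbb{R}^d:\|x-z\|\le\gamma\}$. For $w\neq 0$, the halfspace $h_w(x)=\operatorname{sign}(\langle w,x\rangle)$ is regarded as erring on a labeled point $(z,y)$ iff $y\langle w,z\rangle\le 0$. The benchmarks are $\mathsf{OPT}^{\gamma}_{\mathrm{pert}}=\min_{w\neq 0}\sum_{t=1}^T\max_{z_t\in B(x_t,\gamma)}\mathbb{1}[y_t\langle w,z_t\rangle\le 0]$, $\mathsf{OPT}^{\gamma}_{\mathrm{margin}}=\min_{w\neq 0}\sum_{t=1}^T\mathbb{1}\!\left[\frac{y_t\langle w,x_t\rangle}{\|w\|_\star}\le\gamma\right]$, $\mathsf{OPT}^{\sigma,\varepsilon}_{\mathrm{gauss}}=\min_{w\neq 0}\sum_{t=1}^T\mathbb{1}\!\left[y_t\,\mathbb{E}_{z\sim\mathcal{N}(0,I_d)}[\operatorname{sign}(\langle w,x_t+\sigma z\rangle)]\le\varepsilon\right]$ (the value of $\operatorname{sign}(0)$ is irrelevant here as it occurs with probability zero). $\Phi^{-1}$ is the inverse CDF of the standard univariate Gaussian. *)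

theory Defs
  imports "HOL-Probability.Probability"
begin

definition is_norm :: "(real^'d \<Rightarrow> real) \<Rightarrow> bool" where
  "is_norm N \<longleftrightarrow> (\<forall>x. 0 \<le> N x) \<and> (\<forall>x. N x = 0 \<longleftrightarrow> x = 0)
     \<and> (\<forall>c x. N (c *\<^sub>R x) = \<bar>c\<bar> * N x) \<and> (\<forall>x y. N (x + y) \<le> N x + N y)"

definition dual_norm :: "(real^'d \<Rightarrow> real) \<Rightarrow> real^'d \<Rightarrow> real" where
  "dual_norm N w = Sup {w \<bullet> x | x. N x \<le> 1}"

definition OPT_pert :: "(real^'d \<Rightarrow> real) \<Rightarrow> real \<Rightarrow> nat \<Rightarrow> (nat \<Rightarrow> real^'d) \<Rightarrow> (nat \<Rightarrow> real) \<Rightarrow> nat" where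
  "OPT_pert N \<gamma> T xs ys = (INF w\<in>{w. w \<noteq> 0}.
     \<Sum>t=1..T. Max ((\<lambda>z. if ys t * (w \<bullet> z) \<le> 0 then 1 else 0) ` {z. N (xs t - z) \<le> \<gamma>}))"

definition OPT_margin :: "(real^'d \<Rightarrow> real) \<Rightarrow> real \<Rightarrow> nat \<Rightarrow> (nat \<Rightarrow> real^'d) \<Rightarrow> (nat \<Rightarrow> real) \<Rightarrow> nat" where
  "OPT_margin N \<gamma> T xs ys = (INF w\<in>{w. w \<noteq> 0}.
     \<Sum>t=1..T. (if ys t * (w \<bullet> xs t) / dual_norm N w \<le> \<gamma> then 1 else 0))"

definition gauss_measure :: "(real^'d) measure" where
  "gauss_measure = density lborel (\<lambda>z. ennreal (\<Prod>i\<in>UNIV. std_normal_density (z $ i)))"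

definition OPT_gauss :: "real \<Rightarrow> real \<Rightarrow> nat \<Rightarrow> (nat \<Rightarrow> real^'d) \<Rightarrow> (nat \<Rightarrow> real) \<Rightarrow> nat" where
  "OPT_gauss \<sigma> \<epsilon> T xs ys = (INF w\<in>{w. w \<noteq> 0}.
     \<Sum>t=1..T. (if ys t * (\<integral>z. sgn (w \<bullet> (xs t + \<sigma> *\<^sub>R z)) \<partial>gauss_measure) \<le> \<epsilon> then 1 else 0))"

definition Phi :: "real \<Rightarrow> real" where
  "Phi t = (\<integral>x. indicator {..t} x * std_normal_density x \<partial>lborel)"

definition Phi_inv :: "real \<Rightarrow> real" where
  "Phi_inv p = (THE t. Phi t = p)"

end

theory Submission
  imports Defs
begin


lemma isn_0: "is_norm N \<Longrightarrow> N 0 = 0" unfolding is_norm_def by auto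
lemma isn_nonneg: "is_norm N \<Longrightarrow> 0 \<le> N x" unfolding is_norm_def by auto
lemma isn_scale: "is_norm N \<Longrightarrow> N (c *\<^sub>R x) = \<bar>c\<bar> * N x" unfolding is_norm_def by auto
lemma isn_tri: "is_norm N \<Longrightarrow> N (x + y) \<le> N x + N y" unfolding is_norm_def by auto
lemma isn_eq0: "is_norm N \<Longrightarrow> N x = 0 \<longleftrightarrow> x = 0" unfolding is_norm_def by auto
lemma isn_minus: "is_norm N \<Longrightarrow> N (x - y) = N (y - x)"
  using isn_scale[of N "-1" "x - y"] by simp

lemma isn_sum: assumes "is_norm N" "finite S" shows "N (\<Sum>i\<in>S. f i) \<le> (\<Sum>i\<in>S. N (f i))"
  using assms(2)
proof induction
  case empty then show ?case using isn_0[OF assms(1)] by simp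
next
  case (insert a F)
  then show ?case using isn_tri[OF assms(1), of "f a" "sum f F"] by simp
qed

lemma isn_upper: fixes N :: "real^'d \<Rightarrow> real" assumes "is_norm N" shows "\<exists>C>0. \<forall>x. N x \<le> C * norm x"
proof -
  define C where "C = 1 + (\<Sum>b\<in>Basis. N b)"
  have Cpos: "C > 0" unfolding C_def using isn_nonneg[OF assms] by (simp add: add_pos_nonneg sum_nonneg)
  have "N x \<le> C * norm x" for x :: "real^'d"
  proof -
    have "N x = N (\<Sum>b\<in>Basis. (x \<bullet> b) *\<^sub>R b)" by (simp add: euclidean_representation)
    also have "\<dots> \<le> (\<Sum>b\<in>Basis. N ((x \<bullet> b) *\<^sub>R b))" by (rule isn_sum[OF assms]) simp
    also have "\<dots> = (\<Sum>b\<in>Basis. \<bar>x \<bullet> b\<bar> * N b)" using isn_scale[OF assms] by simp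
    also have "\<dots> \<le> (\<Sum>b\<in>Basis. norm x * N b)"
      by (intro sum_mono mult_right_mono Basis_le_norm isn_nonneg[OF assms]) auto
    also have "\<dots> = norm x * (C - 1)" unfolding C_def by (simp add: sum_distrib_left)
    also have "\<dots> \<le> C * norm x" by (simp add: algebra_simps)
    finally show ?thesis .
  qed
  with Cpos show ?thesis by blast
qed

lemma isn_cont: fixes N :: "real^'d \<Rightarrow> real" assumes "is_norm N" shows "continuous_on UNIV N"
proof -
  obtain C where C: "C > 0" "\<And>x. N x \<le> C * norm x" using isn_upper[OF assms] by blast
  have L: "\<bar>N x - N y\<bar> \<le> C * dist x y" for x y
  proof -
    have "N x \<le> N (x - y) + N y" using isn_tri[OF assms, of "x - y" y] by simp
    moreover have "N y \<le> N (y - x) + N x" using isn_tri[OF assms, of "y - x" x] by simp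
    moreover have "N (x - y) \<le> C * dist x y" "N (y - x) \<le> C * dist x y"
      using C(2)[of "x - y"] C(2)[of "y - x"] by (auto simp: dist_norm norm_minus_commute)
    ultimately show ?thesis by linarith
  qed
  show ?thesis unfolding continuous_on_iff
  proof (intro ballI allI impI)
    fix x and e :: real assume "e > 0"
    show "\<exists>d>0. \<forall>x'\<in>UNIV. dist x' x < d \<longrightarrow> dist (N x') (N x) < e"
    proof (intro exI[of _ "e / C"] conjI ballI impI)
      show "e / C > 0" using \<open>e > 0\<close> C by simp
      fix x' assume "dist x' x < e / C"
      then have "C * dist x' x < e" using C by (simp add: field_simps)
      then show "dist (N x') (N x) < e" using L[of x' x] by (simp add: dist_real_def)
    qed
  qed
qed

lemma isn_lower: fixes N :: "real^'d \<Rightarrow> real" assumes "is_norm N" shows "\<exists>c>0. \<forall>x. c * norm x \<le> N x"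
proof -
  let ?S = "sphere (0::real^'d) 1"
  have "compact ?S" by simp
  moreover have "?S \<noteq> {}"
  proof -
    have "(SOME i. i \<in> Basis) \<in> ?S" using SOME_Basis norm_Basis by simp
    then show ?thesis by blast
  qed
  moreover have "continuous_on ?S N" using isn_cont[OF assms] by (rule continuous_on_subset) simp
  ultimately obtain u where u: "u \<in> ?S" "\<And>v. v \<in> ?S \<Longrightarrow> N u \<le> N v"
    using continuous_attains_inf[of ?S N] by auto
  have "u \<noteq> 0" using u(1) by auto
  then have cpos: "N u > 0" using isn_eq0[OF assms, of u] isn_nonneg[OF assms, of u] by linarith
  have "N u * norm x \<le> N x" for x
  proof (cases "x = 0")
    case True then show ?thesis using isn_0[OF assms] by simp
  next
    case False
    then have "(1 / norm x) *\<^sub>R x \<in> ?S" by simp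
    then have "N u \<le> N ((1 / norm x) *\<^sub>R x)" by (rule u(2))
    also have "\<dots> = N x / norm x" using isn_scale[OF assms, of "1 / norm x" x] by simp
    finally show ?thesis using False by (simp add: field_simps)
  qed
  with cpos show ?thesis by blast
qed

lemma dual_attain:
  fixes N :: "real^'d \<Rightarrow> real"
  assumes "is_norm N" and w: "w \<noteq> 0"
  shows "\<exists>u. N u \<le> 1 \<and> w \<bullet> u = dual_norm N w \<and> (\<forall>v. N v \<le> 1 \<longrightarrow> w \<bullet> v \<le> dual_norm N w) \<and> dual_norm N w > 0"
proof -
  let ?S = "{u. N u \<le> 1}"
  obtain c where c: "c > 0" "\<And>x. c * norm x \<le> N x" using isn_lower[OF assms(1)] by blast
  have "closed ?S" using isn_cont[OF assms(1)]
    by (intro closed_Collect_le continuous_on_const) auto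
  moreover have "bounded ?S"
  proof -
    have "norm x \<le> 1 / c" if "N x \<le> 1" for x using c(2)[of x] that c(1) by (simp add: field_simps)
    then show ?thesis unfolding bounded_iff by (intro exI[of _ "1/c"]) simp
  qed
  ultimately have "compact ?S" by (simp add: compact_eq_bounded_closed)
  moreover have "?S \<noteq> {}" using isn_0[OF assms(1)] by (metis (mono_tags) empty_iff mem_Collect_eq zero_le_one)
  moreover have "continuous_on ?S (\<lambda>u. w \<bullet> u)" by (intro continuous_intros)
  ultimately obtain u where u: "u \<in> ?S" "\<And>v. v \<in> ?S \<Longrightarrow> w \<bullet> v \<le> w \<bullet> u"
    using continuous_attains_sup[of ?S "\<lambda>u. w \<bullet> u"] by auto
  have D: "dual_norm N w = w \<bullet> u"
    unfolding dual_norm_def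
  proof (rule cSup_eq_maximum)
    show "w \<bullet> u \<in> {w \<bullet> x |x. N x \<le> 1}" using u(1) by blast
    show "\<And>y. y \<in> {w \<bullet> x |x. N x \<le> 1} \<Longrightarrow> y \<le> w \<bullet> u" using u(2) by blast
  qed
  have Np: "N w > 0" using isn_eq0[OF assms(1), of w] isn_nonneg[OF assms(1), of w] w by linarith
  have "(1 / N w) *\<^sub>R w \<in> ?S" using isn_scale[OF assms(1), of "1 / N w" w] Np by simp
  then have "w \<bullet> ((1 / N w) *\<^sub>R w) \<le> w \<bullet> u" by (rule u(2))
  moreover have "w \<bullet> ((1 / N w) *\<^sub>R w) > 0" using Np w by simp
  ultimately have "dual_norm N w > 0" using D by simp
  then show ?thesis using u D by auto
qed


lemma pert_iff:
  fixes N :: "real^'d \<Rightarrow> real"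
  assumes N: "is_norm N" and g: "\<gamma> > 0" and y: "y \<in> {-1, 1}" and w: "w \<noteq> 0"
  shows "(\<exists>z. N (x - z) \<le> \<gamma> \<and> y * (w \<bullet> z) \<le> 0) \<longleftrightarrow> y * (w \<bullet> x) / dual_norm N w \<le> \<gamma>"
proof -
  obtain u where u: "N u \<le> 1" "w \<bullet> u = dual_norm N w" "\<And>v. N v \<le> 1 \<Longrightarrow> w \<bullet> v \<le> dual_norm N w"
    "dual_norm N w > 0" using dual_attain[OF N w] by blast
  define D where "D = dual_norm N w"
  have Dp: "D > 0" using u(4) D_def by simp
  have ay: "\<bar>y\<bar> = 1" "y * y = 1" using y by auto
  have "(\<exists>z. N (x - z) \<le> \<gamma> \<and> y * (w \<bullet> z) \<le> 0) \<longleftrightarrow> y * (w \<bullet> x) \<le> \<gamma> * D"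
  proof
    assume "\<exists>z. N (x - z) \<le> \<gamma> \<and> y * (w \<bullet> z) \<le> 0"
    then obtain z where z: "N (x - z) \<le> \<gamma>" "y * (w \<bullet> z) \<le> 0" by blast
    have "N ((y / \<gamma>) *\<^sub>R (x - z)) = N (x - z) / \<gamma>" using isn_scale[OF N, of "y / \<gamma>" "x - z"] ay g by simp
    also have "\<dots> \<le> 1" using z(1) g by simp
    finally have "w \<bullet> ((y / \<gamma>) *\<^sub>R (x - z)) \<le> D" using u(3) D_def by blast
    then have "(y / \<gamma>) * (w \<bullet> x - w \<bullet> z) \<le> D" by (simp add: inner_diff_right)
    then have "y * (w \<bullet> x - w \<bullet> z) \<le> \<gamma> * D" using g by (simp add: field_simps)
    then show "y * (w \<bullet> x) \<le> \<gamma> * D" using z(2) by (simp add: algebra_simps)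
  next
    assume h: "y * (w \<bullet> x) \<le> \<gamma> * D"
    define z where "z = x - (\<gamma> * y) *\<^sub>R u"
    have "N (x - z) = \<gamma> * N u" unfolding z_def using isn_scale[OF N, of "\<gamma> * y" u] ay g
      by (simp add: abs_mult)
    also have "\<dots> \<le> \<gamma>" using u(1) g by simp
    finally have 1: "N (x - z) \<le> \<gamma>" .
    have "y * (w \<bullet> z) = y * (w \<bullet> x) - \<gamma> * (y * y) * D"
      unfolding z_def D_def using u(2) by (simp add: inner_diff_right algebra_simps)
    also have "\<dots> \<le> 0" using h ay by simp
    finally show "\<exists>z. N (x - z) \<le> \<gamma> \<and> y * (w \<bullet> z) \<le> 0" using 1 by blast
  qed
  also have "\<dots> \<longleftrightarrow> y * (w \<bullet> x) / D \<le> \<gamma>" using Dp by (simp add: field_simps)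
  finally show ?thesis unfolding D_def .
qed

lemma pert_point:
  fixes N :: "real^'d \<Rightarrow> real"
  assumes N: "is_norm N" and g: "\<gamma> > 0" and y: "y \<in> {-1, 1}" and w: "w \<noteq> 0"
  shows "Max ((\<lambda>z. if y * (w \<bullet> z) \<le> 0 then 1 else 0) ` {z. N (x - z) \<le> \<gamma>})
       = (if y * (w \<bullet> x) / dual_norm N w \<le> \<gamma> then (1::nat) else 0)"
proof -
  let ?A = "(\<lambda>z. if y * (w \<bullet> z) \<le> 0 then 1 else (0::nat)) ` {z. N (x - z) \<le> \<gamma>}"
  have sub: "?A \<subseteq> {0, 1}" by auto
  then have fin: "finite ?A" by (rule finite_subset) simp
  have xin: "x \<in> {z. N (x - z) \<le> \<gamma>}" using isn_0[OF N] g by simp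
  show ?thesis
  proof (cases "y * (w \<bullet> x) / dual_norm N w \<le> \<gamma>")
    case True
    then obtain z where z: "N (x - z) \<le> \<gamma>" "y * (w \<bullet> z) \<le> 0" using pert_iff[OF N g y w] by blast
    then have "1 \<in> ?A" by force
    moreover have "\<forall>a\<in>?A. a \<le> 1" using sub by auto
    ultimately have "Max ?A = 1" using fin by (intro Max_eqI) auto
    then show ?thesis using True by simp
  next
    case False
    then have "\<forall>z. N (x - z) \<le> \<gamma> \<longrightarrow> \<not> y * (w \<bullet> z) \<le> 0" using pert_iff[OF N g y w] by blast
    then have "?A = (\<lambda>z. 0) ` {z. N (x - z) \<le> \<gamma>}" by (intro image_cong) auto
    also have "\<dots> = {0}" using xin by blast
    finally have "?A = {0}" .
    then show ?thesis using False by simp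
  qed
qed

lemma part1:
  fixes N :: "real^'d \<Rightarrow> real" and xs :: "nat \<Rightarrow> real^'d"
  assumes N: "is_norm N" and ys: "\<forall>t\<in>{1..T}. ys t \<in> {-1, 1}" and g: "\<gamma> > 0"
  shows "OPT_pert N \<gamma> T xs ys = OPT_margin N \<gamma> T xs ys"
  unfolding OPT_pert_def OPT_margin_def
  by (intro INF_cong refl sum.cong pert_point[OF N g]) (use ys in auto)



abbreviation Mn :: "real measure" where "Mn \<equiv> density lborel (\<lambda>x. ennreal (std_normal_density x))"

lemma Mn_prob: "prob_space Mn"
  using prob_space_normal_density[of 1 0] by simp

interpretation Mn: prob_space Mn by (rule Mn_prob)


lemma Basis_vec_real: "(Basis :: (real^'d) set) = range (\<lambda>i. axis i 1)"
  by (auto simp: Basis_vec_def)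

lemma inj_axis1: "inj (\<lambda>i::'d::finite. axis i (1::real))"
  by (auto simp: inj_def axis_eq_axis)

lemma sum_basis_nth:
  fixes f :: "real^'d \<Rightarrow> real"
  shows "(\<Sum>b\<in>Basis. f b *\<^sub>R b) $ i = f (axis i 1)"
proof -
  have ax: "axis i 1 \<in> (Basis :: (real^'d) set)" by (simp add: Basis_vec_real)
  have "(\<Sum>b\<in>Basis. f b *\<^sub>R b) $ i = (\<Sum>b\<in>Basis. f b *\<^sub>R b) \<bullet> axis i 1"
    by (rule cart_eq_inner_axis)
  also have "\<dots> = (\<Sum>b\<in>Basis. f b * (b \<bullet> axis i 1))" by (simp add: inner_sum_left)
  also have "\<dots> = (\<Sum>b\<in>Basis. if b = axis i 1 then f b else 0)"
    by (intro sum.cong refl) (simp add: inner_Basis ax)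
  also have "\<dots> = f (axis i 1)" using ax by simp
  finally show ?thesis .
qed

lemma prod_basis:
  fixes f :: "real^'d \<Rightarrow> real"
  shows "(\<Prod>i\<in>UNIV. g (f (axis i 1))) = (\<Prod>b\<in>(Basis :: (real^'d) set). g (f b))"
  unfolding Basis_vec_real by (subst prod.reindex[OF inj_axis1]) simp

lemma indicator_PiE_prod:
  assumes "f \<in> extensional I" "finite I"
  shows "(indicator (PiE I A) f :: ennreal) = (\<Prod>i\<in>I. indicator (A i) (f i))"
proof (cases "\<forall>i\<in>I. f i \<in> A i")
  case True
  then have "f \<in> PiE I A" using assms by (auto simp: PiE_def)
  then show ?thesis using True by simp
next
  case False
  then obtain i where i: "i \<in> I" "f i \<notin> A i" by blast
  then have "f \<notin> PiE I A" by auto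
  moreover have "(\<Prod>i\<in>I. indicator (A i) (f i) :: ennreal) = 0"
    using i assms(2) by (intro prod_zero) (auto simp: indicator_def)
  ultimately show ?thesis by simp
qed


abbreviation PG :: "(real^'d \<Rightarrow> real) measure" where
  "PG \<equiv> PiM Basis (\<lambda>_. Mn)"

interpretation PGps: product_sigma_finite "\<lambda>_::real^'d. Mn"
  by (simp add: product_sigma_finite_def Mn.sigma_finite_measure_axioms)

interpretation LBps: product_sigma_finite "\<lambda>_::real^'d. lborel :: real measure"
  by (simp add: product_sigma_finite_def lborel.sigma_finite_measure_axioms)

lemma PG_density:
  "density (PiM (Basis :: (real^'d) set) (\<lambda>_. lborel)) (\<lambda>f. \<Prod>b\<in>Basis. ennreal (std_normal_density (f b)))
   = (PG :: (real^'d \<Rightarrow> real) measure)"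
proof (rule PGps.PiM_eqI)
  show "finite (Basis :: (real^'d) set)" by simp
  show "sets (density (PiM (Basis :: (real^'d) set) (\<lambda>_. lborel)) (\<lambda>f. \<Prod>b\<in>Basis. ennreal (std_normal_density (f b))))
     = sets (PG :: (real^'d \<Rightarrow> real) measure)"
    by (simp only: sets_density) (rule sets_PiM_cong; simp)
  fix A :: "real^'d \<Rightarrow> real set"
  assume A: "\<And>i. i \<in> Basis \<Longrightarrow> A i \<in> sets Mn"
  have "emeasure (density (PiM (Basis :: (real^'d) set) (\<lambda>_. lborel)) (\<lambda>f. \<Prod>b\<in>Basis. ennreal (std_normal_density (f b)))) (PiE Basis A)
    = (\<integral>\<^sup>+f. (\<Prod>b\<in>Basis. ennreal (std_normal_density (f b))) * indicator (PiE Basis A) f \<partial>PiM Basis (\<lambda>_. lborel))"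
    using A by (subst emeasure_density) (auto intro!: sets_PiM_I_finite)
  also have "\<dots> = (\<integral>\<^sup>+f. (\<Prod>b\<in>Basis. ennreal (std_normal_density (f b)) * indicator (A b) (f b)) \<partial>PiM Basis (\<lambda>_. lborel))"
  proof (intro nn_integral_cong)
    fix f assume "f \<in> space (PiM (Basis :: (real^'d) set) (\<lambda>_. lborel :: real measure))"
    then have e: "f \<in> extensional Basis" by (simp add: space_PiM PiE_def)
    show "(\<Prod>b\<in>Basis. ennreal (std_normal_density (f b))) * indicator (PiE Basis A) f
       = (\<Prod>b\<in>Basis. ennreal (std_normal_density (f b)) * indicator (A b) (f b))"
      by (simp only: indicator_PiE_prod[OF e finite_Basis] prod.distrib)
  qed
  also have "\<dots> = (\<Prod>b\<in>Basis. \<integral>\<^sup>+x. ennreal (std_normal_density x) * indicator (A b) x \<partial>lborel)"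
    using A by (intro LBps.product_nn_integral_prod) auto
  also have "\<dots> = (\<Prod>b\<in>Basis. emeasure Mn (A b))"
    using A by (intro prod.cong refl) (simp add: emeasure_density)
  finally show "emeasure (density (PiM (Basis :: (real^'d) set) (\<lambda>_. lborel)) (\<lambda>f. \<Prod>b\<in>Basis. ennreal (std_normal_density (f b)))) (PiE Basis A)
    = (\<Prod>b\<in>Basis. emeasure Mn (A b))" .
qed

lemma gauss_eq: "(gauss_measure :: (real^'d) measure) = distr (PG :: (real^'d \<Rightarrow> real) measure) borel (\<lambda>f. \<Sum>b\<in>Basis. f b *\<^sub>R b)"
proof -
  let ?S = "\<lambda>f::real^'d \<Rightarrow> real. \<Sum>b\<in>Basis. f b *\<^sub>R b"
  let ?g = "\<lambda>z::real^'d. ennreal (\<Prod>i\<in>UNIV. std_normal_density (z $ i))"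
  have "(gauss_measure :: (real^'d) measure) = density lborel ?g" unfolding gauss_measure_def ..
  also have "\<dots> = density (distr (PiM Basis (\<lambda>_. lborel)) borel ?S) ?g"
    by (subst lborel_eq) rule
  also have "\<dots> = distr (density (PiM Basis (\<lambda>_. lborel)) (\<lambda>f. ?g (?S f))) borel ?S"
    by (rule density_distr) auto
  also have "density (PiM Basis (\<lambda>_. lborel)) (\<lambda>f. ?g (?S f))
      = density (PiM Basis (\<lambda>_. lborel)) (\<lambda>f. \<Prod>b\<in>Basis. ennreal (std_normal_density (f b)))"
  proof (rule density_cong)
    have Sm: "?S \<in> borel_measurable (PiM Basis (\<lambda>_. lborel))" by measurable
    have gm: "?g \<in> borel_measurable borel" by measurable
    show "(\<lambda>f. ?g (?S f)) \<in> borel_measurable (PiM Basis (\<lambda>_. lborel))"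
      using measurable_comp[OF Sm gm] by (simp add: o_def)
    show "(\<lambda>f. \<Prod>b\<in>Basis. ennreal (std_normal_density (f b))) \<in> borel_measurable (PiM Basis (\<lambda>_. lborel))" by measurable
    show "AE f in PiM Basis (\<lambda>_. lborel). ?g (?S f) = (\<Prod>b\<in>Basis. ennreal (std_normal_density (f b)))"
    proof (intro AE_I2)
      fix f :: "real^'d \<Rightarrow> real"
      have "?g (?S f) = ennreal (\<Prod>b\<in>Basis. std_normal_density (f b))"
        by (simp only: sum_basis_nth prod_basis[where g = std_normal_density])
      also have "\<dots> = (\<Prod>b\<in>Basis. ennreal (std_normal_density (f b)))"
        by (rule prod_ennreal[symmetric]) simp
      finally show "?g (?S f) = (\<Prod>b\<in>Basis. ennreal (std_normal_density (f b)))" .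
    qed
  qed
  also have "\<dots> = PG" by (rule PG_density)
  finally show ?thesis .
qed


lemma PG_prob: "prob_space (PG :: (real^'d \<Rightarrow> real) measure)"
  by (rule prob_space_PiM) (rule Mn_prob)

interpretation PG: prob_space "PG :: (real^'d \<Rightarrow> real) measure" by (rule PG_prob)

lemma PG_component: "b \<in> Basis \<Longrightarrow> distr (PG :: (real^'d \<Rightarrow> real) measure) borel (\<lambda>f. f b) = Mn"
proof -
  assume b: "b \<in> Basis"
  have "distr (PG :: (real^'d \<Rightarrow> real) measure) borel (\<lambda>f. f b) = distr PG Mn (\<lambda>f. f b)"
    by (rule distr_cong) auto
  also have "\<dots> = Mn" by (rule distr_PiM_component[OF Mn_prob b])
  finally show ?thesis .
qed

lemma PG_indep: "PG.indep_vars (\<lambda>_. borel) (\<lambda>b f. f b) (Basis :: (real^'d) set)"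
proof (subst PG.indep_vars_iff_distr_eq_PiM')
  show "(Basis :: (real^'d) set) \<noteq> {}" by simp
  show "(\<lambda>f. f i) \<in> measurable (PG :: (real^'d \<Rightarrow> real) measure) borel" if "i \<in> (Basis :: (real^'d) set)" for i
  proof -
    have "(\<lambda>f. f i) \<in> measurable (PG :: (real^'d \<Rightarrow> real) measure) Mn"
      by (rule measurable_component_singleton) (rule that)
    then show ?thesis using measurable_cong_sets[of PG PG Mn borel] by simp
  qed
  have "distr (PG :: (real^'d \<Rightarrow> real) measure) (PiM Basis (\<lambda>_. borel)) (\<lambda>x. \<lambda>i\<in>Basis. x i)
      = distr PG (PiM Basis (\<lambda>_. borel)) (\<lambda>x. x)"
    by (rule distr_cong) (auto simp: space_PiM PiE_def extensional_restrict)
  also have "\<dots> = PG"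
    by (rule distr_id2) (rule sets_PiM_cong; simp)
  also have "\<dots> = PiM Basis (\<lambda>i. distr PG borel (\<lambda>f. f i))"
    by (rule PiM_cong) (simp_all add: PG_component)
  finally show "distr (PG :: (real^'d \<Rightarrow> real) measure) (PiM Basis (\<lambda>_. borel)) (\<lambda>x. \<lambda>i\<in>Basis. x i)
      = PiM Basis (\<lambda>i. distr PG borel (\<lambda>f. f i))" .
qed

lemma PG_std: "b \<in> Basis \<Longrightarrow> distributed (PG :: (real^'d \<Rightarrow> real) measure) lborel (\<lambda>f. f b) (\<lambda>x. ennreal (std_normal_density x))"
proof -
  assume b: "b \<in> Basis"
  have "distr (PG :: (real^'d \<Rightarrow> real) measure) lborel (\<lambda>f. f b) = distr PG borel (\<lambda>f. f b)"
    by (rule distr_cong) auto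
  then show ?thesis unfolding distributed_def using PG_component[OF b] b by simp
qed

lemma PG_unit:
  assumes u: "norm (u :: real^'d) = 1"
  shows "distributed (PG :: (real^'d \<Rightarrow> real) measure) lborel (\<lambda>f. \<Sum>b\<in>Basis. (u \<bullet> b) * f b) (\<lambda>x. ennreal (std_normal_density x))"
proof -
  define I where "I = {b \<in> (Basis :: (real^'d) set). u \<bullet> b \<noteq> 0}"
  have fin: "finite I" unfolding I_def by simp
  have sq: "(\<Sum>b\<in>I. (u \<bullet> b)\<^sup>2) = 1"
  proof -
    have "(\<Sum>b\<in>I. (u \<bullet> b)\<^sup>2) = (\<Sum>b\<in>Basis. (u \<bullet> b)\<^sup>2)"
      unfolding I_def by (intro sum.mono_neutral_left) auto
    also have "\<dots> = u \<bullet> u" by (subst euclidean_inner) (simp add: power2_eq_square)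
    also have "\<dots> = 1" using u by (simp add: dot_square_norm)
    finally show ?thesis .
  qed
  then have ne: "I \<noteq> {}" by auto
  have eqsum: "(\<lambda>f. \<Sum>b\<in>Basis. (u \<bullet> b) * f b) = (\<lambda>f. \<Sum>b\<in>I. (u \<bullet> b) * f b)"
    unfolding I_def by (intro ext sum.mono_neutral_right) auto
  have ind: "PG.indep_vars (\<lambda>_. borel) (\<lambda>b f. (u \<bullet> b) * f b) I"
  proof -
    have "PG.indep_vars (\<lambda>_. borel) (\<lambda>b f. f b) I"
      by (rule PG.indep_vars_subset[OF PG_indep]) (auto simp: I_def)
    from PG.indep_vars_compose2[OF this, of "\<lambda>b x. (u \<bullet> b) * x" "\<lambda>_. borel"]
    show ?thesis by simp
  qed
  have dist: "distributed PG lborel (\<lambda>f. (u \<bullet> b) * f b) (normal_density 0 \<bar>u \<bullet> b\<bar>)" if "b \<in> I" for b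
  proof -
    have "b \<in> Basis" "u \<bullet> b \<noteq> 0" using that by (auto simp: I_def)
    from PG.normal_density_affine[OF PG_std[OF this(1)] _ this(2), of 0]
    show ?thesis by simp
  qed
  have "distributed PG lborel (\<lambda>f. \<Sum>b\<in>I. (u \<bullet> b) * f b)
     (normal_density (\<Sum>b\<in>I. 0) (sqrt (\<Sum>b\<in>I. \<bar>u \<bullet> b\<bar>\<^sup>2)))"
    by (rule PG.sum_indep_normal[OF fin ne ind]) (use dist in \<open>auto simp: I_def\<close>)
  then show ?thesis using sq eqsum by simp
qed



lemma sets_Mn[simp, measurable_cong]: "sets Mn = sets borel" by simp
lemma space_Mn[simp]: "space Mn = UNIV" by simp

lemma Phi_eq: "Phi t = measure Mn {..t}"
proof -
  have "measure Mn {..t} = (\<integral>x. indicator {..t} x \<partial>Mn)" by simp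
  also have "\<dots> = (\<integral>x. std_normal_density x *\<^sub>R indicator {..t} x \<partial>lborel)"
    by (subst integral_density) auto
  finally show ?thesis unfolding Phi_def by (simp add: mult.commute)
qed

lemma Mn_singleton: "measure Mn {t} = 0"
proof -
  have "emeasure Mn {t} = (\<integral>\<^sup>+x. ennreal (std_normal_density x) * indicator {t} x \<partial>lborel)"
    by (subst emeasure_density) auto
  also have "\<dots> = 0"
  proof (subst nn_integral_0_iff_AE)
    show "AE x in lborel. ennreal (std_normal_density x) * indicator {t} x = 0"
      using AE_lborel_singleton[of t] by eventually_elim auto
  qed auto
  finally show ?thesis by (simp add: measure_def)
qed



lemma Mn_less: "measure Mn {..<t} = measure Mn {..t}"
proof -
  have "{..<t} = {..t} - {t}" by auto
  then have "measure Mn {..<t} = measure Mn {..t} - measure Mn {t}"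
    by (simp add: Mn.finite_measure_Diff)
  then show ?thesis using Mn_singleton by simp
qed

lemma std_sym: "std_normal_density (- x) = std_normal_density x"
  by (simp add: std_normal_density_def)

lemma Mn_refl: "emeasure Mn {..-t} = emeasure Mn {t..}"
proof -
  have "emeasure Mn {..-t} = (\<integral>\<^sup>+x. ennreal (std_normal_density x) * indicator {..-t} x \<partial>lborel)"
    by (subst emeasure_density) auto
  also have "\<dots> = (\<integral>\<^sup>+x. ennreal (std_normal_density (0 + -1 * x)) * indicator {..-t} (0 + -1 * x) \<partial>lborel)"
    using nn_integral_real_affine[of "\<lambda>x. ennreal (std_normal_density x) * indicator {..-t} x" "-1" 0] by simp
  also have "\<dots> = (\<integral>\<^sup>+x. ennreal (std_normal_density x) * indicator {t..} x \<partial>lborel)"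
    by (intro nn_integral_cong) (auto simp: std_sym split: split_indicator)
  also have "\<dots> = emeasure Mn {t..}"
    by (subst emeasure_density) auto
  finally show ?thesis .
qed

lemma Phi_sym: "Phi (- t) = 1 - Phi t"
proof -
  have "Phi (- t) = measure Mn {t..}" unfolding Phi_eq using Mn_refl[of t] by (simp add: measure_def)
  also have "{t..} = space Mn - {..<t}" by auto
  also have "measure Mn (space Mn - {..<t}) = 1 - measure Mn {..<t}" by (rule Mn.prob_compl) simp
  finally show ?thesis using Mn_less unfolding Phi_eq by simp
qed

lemma Phi_0: "Phi 0 = 1/2" using Phi_sym[of 0] by simp

lemma Phi_strict: assumes "t1 < t2" shows "Phi t1 < Phi t2"
proof -
  define M where "M = \<bar>t1\<bar> + \<bar>t2\<bar>"
  define m where "m = std_normal_density M"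
  have mpos: "m > 0" unfolding m_def by (simp add: normal_density_pos)
  have mle: "m \<le> std_normal_density x" if "x \<in> {t1<..t2}" for x
  proof -
    have "\<bar>x\<bar> \<le> M" using that unfolding M_def by auto
    then have "x\<^sup>2 \<le> M\<^sup>2" by (metis abs_ge_zero power2_abs power_mono)
    then have "exp (- (M\<^sup>2 / 2)) \<le> exp (- (x\<^sup>2 / 2))" by simp
    then show ?thesis unfolding m_def std_normal_density_def by (simp add: divide_right_mono)
  qed
  have "ennreal (m * (t2 - t1)) = (\<integral>\<^sup>+x. ennreal m * indicator {t1<..t2} x \<partial>lborel)"
    using assms mpos by (simp add: ennreal_mult nn_integral_cmult_indicator)
  also have "\<dots> \<le> (\<integral>\<^sup>+x. ennreal (std_normal_density x) * indicator {t1<..t2} x \<partial>lborel)"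
    by (intro nn_integral_mono) (auto simp: mle split: split_indicator)
  also have "\<dots> = emeasure Mn {t1<..t2}" by (subst emeasure_density) auto
  finally have "m * (t2 - t1) \<le> measure Mn {t1<..t2}"
    by (simp add: Mn.emeasure_eq_measure)
  moreover have "m * (t2 - t1) > 0" using mpos assms by simp
  moreover have "measure Mn {t1<..t2} = measure Mn {..t2} - measure Mn {..t1}"
  proof -
    have "{t1<..t2} = {..t2} - {..t1}" by auto
    then show ?thesis using assms by (simp add: Mn.finite_measure_Diff)
  qed
  ultimately show ?thesis unfolding Phi_eq by simp
qed

lemma Phi_mono_iff: "Phi a \<le> Phi b \<longleftrightarrow> a \<le> b"
  using Phi_strict[of a b] Phi_strict[of b a] by (cases a b rule: linorder_cases) auto

interpretation Mnd: real_distribution Mn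
  by (intro_locales) (auto simp: real_distribution_axioms_def Mn.prob_space_axioms)

lemma Phi_cdf: "Phi = cdf Mn" by (auto simp: Phi_eq cdf_def)

lemma Phi_cont: "isCont Phi t"
  unfolding Phi_cdf using Mnd.isCont_cdf Mn_singleton by blast

lemma Phi_top: "(Phi \<longlongrightarrow> 1) at_top"
  unfolding Phi_cdf by (rule Mnd.cdf_lim_at_top_prob)

lemma Phi_inv_eq: assumes "1/2 < p" "p < 1" shows "Phi (Phi_inv p) = p"
proof -
  have "eventually (\<lambda>x. Phi x > p) at_top" using Phi_top assms(2) by (rule order_tendstoD)
  then obtain b where b: "\<And>x. x \<ge> b \<Longrightarrow> Phi x > p" by (auto simp: eventually_at_top_linorder)
  define c where "c = max b 0"
  have "Phi c > p" using b c_def by simp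
  have "\<exists>x\<ge>0. x \<le> c \<and> Phi x = p"
    by (rule IVT') (use Phi_0 assms \<open>Phi c > p\<close> c_def Phi_cont in \<open>auto intro!: continuous_at_imp_continuous_on\<close>)
  then obtain t where t: "Phi t = p" by blast
  have "Phi_inv p = t" unfolding Phi_inv_def
  proof (rule the_equality)
    show "Phi t = p" by (rule t)
    fix s assume "Phi s = p"
    then show "s = t" using t Phi_mono_iff[of s t] Phi_mono_iff[of t s] by simp
  qed
  then show ?thesis using t by simp
qed



lemma sgn_1d:
  assumes s: "s > 0"
  shows "(\<integral>g. sgn (a + s * g) \<partial>Mn) = 2 * Phi (a / s) - 1"
proof -
  define c where "c = - (a / s)"
  have eq: "sgn (a + s * g) = indicator {c<..} g - indicator {..<c} g" for g
  proof -
    have "a + s * g > 0 \<longleftrightarrow> g > c" "a + s * g < 0 \<longleftrightarrow> g < c"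
      unfolding c_def using s by (auto simp: field_simps)
    then show ?thesis by (auto simp: sgn_real_def indicator_def)
  qed
  have "(\<integral>g. sgn (a + s * g) \<partial>Mn) = (\<integral>g. indicator {c<..} g - indicator {..<c} g \<partial>Mn)"
    by (simp add: eq)
  also have "\<dots> = measure Mn {c<..} - measure Mn {..<c}"
    by (subst Bochner_Integration.integral_diff) (auto intro!: Mn.integrable_const_bound[where B=1])
  also have "measure Mn {c<..} = 1 - measure Mn {..c}"
  proof -
    have "{c<..} = space Mn - {..c}" by auto
    then show ?thesis using Mn.prob_compl[of "{..c}"] by simp
  qed
  also have "measure Mn {..<c} = Phi c" by (simp add: Mn_less Phi_eq)
  also have "measure Mn {..c} = Phi c" by (simp add: Phi_eq)
  also have "Phi c = 1 - Phi (a / s)" unfolding c_def by (rule Phi_sym)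
  finally show ?thesis by simp
qed


lemma gauss_int:
  fixes w x :: "real^'d"
  assumes w: "w \<noteq> 0" and sg: "\<sigma> > 0"
  shows "(\<integral>z. sgn (w \<bullet> (x + \<sigma> *\<^sub>R z)) \<partial>gauss_measure) = 2 * Phi ((w \<bullet> x) / (\<sigma> * norm w)) - 1"
proof -
  define u where "u = (1 / norm w) *\<^sub>R w"
  define s where "s = \<sigma> * norm w"
  define a where "a = w \<bullet> x"
  define h where "h = (\<lambda>g::real. sgn (a + s * g))"
  have u1: "norm u = 1" unfolding u_def using w by simp
  have spos: "s > 0" unfolding s_def using w sg by simp
  have hm: "h \<in> borel_measurable borel" unfolding h_def
  proof -
    have 1: "(\<lambda>g::real. a + s * g) \<in> borel_measurable borel" by simp
    show "(\<lambda>g::real. sgn (a + s * g)) \<in> borel_measurable borel" using measurable_compose[OF 1 borel_measurable_sgn] .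
  qed
  let ?S = "\<lambda>f::real^'d \<Rightarrow> real. \<Sum>b\<in>Basis. f b *\<^sub>R b"
  let ?Y = "\<lambda>f::real^'d \<Rightarrow> real. \<Sum>b\<in>Basis. (u \<bullet> b) * f b"
  have Sm: "?S \<in> measurable (PG :: (real^'d \<Rightarrow> real) measure) borel"
  proof -
    have "?S \<in> borel_measurable (PiM Basis (\<lambda>_. lborel))" by measurable
    moreover have e: "sets (PiM (Basis :: (real^'d) set) (\<lambda>_. lborel)) = sets PG" by (rule sets_PiM_cong) simp_all
    ultimately show ?thesis using measurable_cong_sets[OF e refl] by simp
  qed
  have YS: "u \<bullet> ?S f = ?Y f" for f
    unfolding inner_sum_right inner_scaleR_right by (simp only: mult.commute)
  have 1: "(\<integral>z. sgn (w \<bullet> (x + \<sigma> *\<^sub>R z)) \<partial>gauss_measure) = (\<integral>z. h (u \<bullet> z) \<partial>gauss_measure)"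
  proof (intro Bochner_Integration.integral_cong refl)
    fix z :: "real^'d"
    have "w \<bullet> (x + \<sigma> *\<^sub>R z) = a + s * (u \<bullet> z)"
      unfolding a_def s_def u_def using w by (simp add: inner_add_right)
    then show "sgn (w \<bullet> (x + \<sigma> *\<^sub>R z)) = h (u \<bullet> z)" unfolding h_def by simp
  qed
  also have "\<dots> = (\<integral>f. h (u \<bullet> ?S f) \<partial>PG)"
    unfolding gauss_eq
  proof (rule integral_distr[OF Sm])
    show "(\<lambda>z. h (u \<bullet> z)) \<in> borel_measurable borel"
    proof -
      have "(\<lambda>z. u \<bullet> z) \<in> borel_measurable borel" by simp
      from measurable_compose[OF this hm] show ?thesis .
    qed
  qed
  also have "\<dots> = (\<integral>f. h (?Y f) \<partial>PG)" by (simp add: YS)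
  also have "\<dots> = (\<integral>g. h g \<partial>distr PG lborel ?Y)"
  proof (rule integral_distr[symmetric])
    show "?Y \<in> measurable PG lborel" using distributed_measurable[OF PG_unit[OF u1]] .
    show "h \<in> borel_measurable lborel" using hm measurable_cong_sets[of lborel borel borel borel] by simp
  qed
  also have "distr PG lborel ?Y = Mn"
    using distributed_distr_eq_density[OF PG_unit[OF u1]] .
  also have "(\<integral>g. h g \<partial>Mn) = 2 * Phi (a / s) - 1" unfolding h_def by (rule sgn_1d[OF spos])
  finally show ?thesis unfolding a_def s_def .
qed



lemma dual_euclid: assumes "w \<noteq> 0" shows "dual_norm norm (w::real^'d) = norm w"
  unfolding dual_norm_def
proof (rule cSup_eq_maximum)
  have "norm ((1 / norm w) *\<^sub>R w) \<le> 1" using assms by simp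
  moreover have "w \<bullet> ((1 / norm w) *\<^sub>R w) = norm w"
    using assms by (simp add: dot_square_norm power2_eq_square)
  ultimately show "norm w \<in> {w \<bullet> x |x. norm x \<le> 1}" by (metis (mono_tags, lifting) mem_Collect_eq)
  show "y \<le> norm w" if yin: "y \<in> {w \<bullet> x |x. norm x \<le> 1}" for y
  proof -
    obtain x where x: "y = w \<bullet> x" "norm x \<le> 1" using yin by blast
    have "w \<bullet> x \<le> norm w * norm x" by (rule norm_cauchy_schwarz)
    also have "\<dots> \<le> norm w" using x(2) by (simp add: mult_left_le)
    finally show ?thesis using x(1) by simp
  qed
qed

lemma gauss_point:
  fixes w x :: "real^'d"
  assumes w: "w \<noteq> 0" and sg: "\<sigma> > 0" and y: "y \<in> {-1, 1}" and t0: "Phi t0 = 1/2 + \<epsilon>/2"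
  shows "(y * (w \<bullet> x) / dual_norm norm w \<le> \<sigma> * t0)
     \<longleftrightarrow> (y * (\<integral>z. sgn (w \<bullet> (x + \<sigma> *\<^sub>R z)) \<partial>gauss_measure) \<le> \<epsilon>)"
proof -
  define c where "c = (w \<bullet> x) / (\<sigma> * norm w)"
  have nw: "norm w > 0" using w by simp
  have "y * (w \<bullet> x) / dual_norm norm w \<le> \<sigma> * t0 \<longleftrightarrow> y * c \<le> t0"
    unfolding dual_euclid[OF w] c_def using nw sg by (simp add: field_simps)
  also have "\<dots> \<longleftrightarrow> y * (2 * Phi c - 1) \<le> \<epsilon>"
  proof (cases "y = 1")
    case True
    then show ?thesis using Phi_mono_iff[of c t0] t0 by auto
  next
    case False
    then have y1: "y = -1" using y by auto
    have "-(2 * Phi c - 1) = 2 * Phi (- c) - 1" using Phi_sym[of c] by simp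
    then show ?thesis using Phi_mono_iff[of "-c" t0] t0 y1 by auto
  qed
  also have "\<dots> \<longleftrightarrow> y * (\<integral>z. sgn (w \<bullet> (x + \<sigma> *\<^sub>R z)) \<partial>gauss_measure) \<le> \<epsilon>"
    unfolding gauss_int[OF w sg] c_def ..
  finally show ?thesis .
qed

lemma part2:
  fixes xs :: "nat \<Rightarrow> real^'d"
  assumes ys: "\<forall>t\<in>{1..T}. ys t \<in> {-1, 1}"
    and h: "\<sigma> > 0 \<and> 0 < \<epsilon> \<and> \<epsilon> < 1 \<and> \<gamma> > 0 \<and> \<gamma> = \<sigma> * Phi_inv (1/2 + \<epsilon>/2)"
  shows "OPT_margin norm \<gamma> T xs ys = OPT_gauss \<sigma> \<epsilon> T xs ys"
proof -
  have t0: "Phi (Phi_inv (1/2 + \<epsilon>/2)) = 1/2 + \<epsilon>/2" by (rule Phi_inv_eq) (use h in auto)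
  show ?thesis
    unfolding OPT_margin_def OPT_gauss_def
  proof (intro INF_cong refl sum.cong)
    fix w t assume "w \<in> {w :: real^'d. w \<noteq> 0}" "t \<in> {1..T}"
    then have "w \<noteq> 0" "ys t \<in> {-1, 1}" using ys by auto
    from gauss_point[OF this(1) _ this(2) t0, where x = "xs t"] h
    show "(if ys t * (w \<bullet> xs t) / dual_norm norm w \<le> \<gamma> then 1 else (0::nat))
       = (if ys t * (\<integral>z. sgn (w \<bullet> (xs t + \<sigma> *\<^sub>R z)) \<partial>gauss_measure) \<le> \<epsilon> then 1 else 0)"
      by auto
  qed
qed


theorem claim2:
  fixes N :: "real^'d \<Rightarrow> real" and T :: nat
    and xs :: "nat \<Rightarrow> real^'d" and ys :: "nat \<Rightarrow> real"
  assumes "is_norm N" and "T \<ge> 1" and "\<forall>t\<in>{1..T}. ys t \<in> {-1, 1}"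
  shows "(\<forall>\<gamma>>0. OPT_pert N \<gamma> T xs ys = OPT_margin N \<gamma> T xs ys)
    \<and> (\<forall>\<sigma> \<epsilon> \<gamma>. \<sigma> > 0 \<and> 0 < \<epsilon> \<and> \<epsilon> < 1 \<and> \<gamma> > 0 \<and> \<gamma> = \<sigma> * Phi_inv (1/2 + \<epsilon>/2) \<longrightarrow>
          OPT_margin norm \<gamma> T xs ys = OPT_gauss \<sigma> \<epsilon> T xs ys)"
  using part1[OF assms(1) assms(3)] part2[OF assms(3)] by blast

end
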